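(* Let $n\ge 1$ and let $\mathcal{V}\subseteq\{0,1\}^n$ be a set of indicator vectors. Suppose that the primal shatter function of $\mathcal{V}$ has the $(d,d_1)$ Clarkson–Shor property for a fixed integer $d>0$ and a real $1\le d_1\le d$, with a fixed constant $C>0$. That is, for every index set $I\subseteq[n]$ with $|I|=m\le n$ and every integer $1\le k'\le m$, the number of vectors of $\mathcal{V}_{|_I}$ of length at most $k'$ is at most $C m^{d_1}k'^{\,d-d_1}$. Let $d_0$ be the VC-dimension of $\mathcal{V}$. Let $\delta$ be an integer with $1\le\delta\le n/2^{(d_0+1)}$, and let $k$ be an integer with $1\le k\le n$ and $k\ge\delta/2$. Then $$\mathcal{M}(\delta,k,\mathcal{V})=O\!\left(\frac{n^{d_1}k^{d-d_1}}{\delta^d}\right).$$ Here $\mathcal{M}(\delta,k,\mathcal{V})$ is the maximum cardinality of a $\delta$-separated subset of $\mathcal{V}$ all of whose vectors have length at most $k$. The constant of proportionality depends on $d$ (with $d_0$ and $C$ regarded as fixed) and not on $n$, $k$ or $\delta$.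
   Context: For $\mathbf{v}\in\{0,1\}^n$, its length is $\|\mathbf{v}\|=\sum_i|\mathbf{v}_i|$. The distance between two vectors is $\rho(\mathbf{u},\mathbf{v})=\sum_i|\mathbf{u}_i-\mathbf{v}_i|$, i.e. the Hamming distance. A set $\mathcal{W}$ of vectors is $\delta$-separated if $\rho(\mathbf{u},\mathbf{v})>\delta$ for all distinct $\mathbf{u},\mathbf{v}\in\mathcal{W}$. For a sequence of indices $I=(i_1,\dots,i_m)$, the projection is $\mathcal{V}_{|_I}=\{(\mathbf{v}_{i_1},\dots,\mathbf{v}_{i_m}):\mathbf{v}\in\mathcal{V}\}$, a set of distinct vectors. The primal shatter function is $\pi_{\mathcal{V}}(m)=\max_{|I|=m}|\mathcal{V}_{|_I}|$. An index sequence $I$ is shattered if $\mathcal{V}_{|_I}=\{0,1\}^{|I|}$. The VC-dimension $d_0$ is the largest size of a shattered sequence. *)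

theory Defs
  imports Complex_Main
begin

text \<open>A vector in {0,1}^n is represented by its support, a subset of {..<n}.
  A set of indicator vectors is thus a set V with V \<subseteq> Pow {..<n}.\<close>

definition vlen :: "nat set \<Rightarrow> nat" where
  "vlen v = card v"

definition hdist :: "nat set \<Rightarrow> nat set \<Rightarrow> nat" where
  "hdist u v = card ((u - v) \<union> (v - u))"

definition separated :: "nat \<Rightarrow> nat set set \<Rightarrow> bool" where
  "separated \<delta> W \<longleftrightarrow> (\<forall>u\<in>W. \<forall>v\<in>W. u \<noteq> v \<longrightarrow> hdist u v > \<delta>)"

definition proj :: "nat set set \<Rightarrow> nat set \<Rightarrow> nat set set" where
  "proj V I = (\<lambda>v. v \<inter> I) ` V"

definition shattered :: "nat set set \<Rightarrow> nat set \<Rightarrow> bool" where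
  "shattered V I \<longleftrightarrow> proj V I = Pow I"

definition vc_dim :: "nat \<Rightarrow> nat set set \<Rightarrow> nat" where
  "vc_dim n V = Sup {card I | I. I \<subseteq> {..<n} \<and> shattered V I}"

definition Mpack :: "nat \<Rightarrow> nat \<Rightarrow> nat set set \<Rightarrow> nat" where
  "Mpack \<delta> k V = Sup {card W | W. W \<subseteq> V \<and> separated \<delta> W \<and> (\<forall>v\<in>W. vlen v \<le> k)}"

definition clarkson_shor :: "nat \<Rightarrow> nat set set \<Rightarrow> nat \<Rightarrow> real \<Rightarrow> real \<Rightarrow> bool" where
  "clarkson_shor n V d d1 C \<longleftrightarrow>
     (\<forall>I k'. I \<subseteq> {..<n} \<and> 1 \<le> k' \<and> k' \<le> card I \<longrightarrow>
        real (card {w \<in> proj V I. vlen w \<le> k'})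
          \<le> C * real (card I) powr d1 * real k' powr (real d - d1))"

end

theory Submission
  imports Defs
begin


definition edges :: "nat set \<Rightarrow> nat set set \<Rightarrow> (nat \<times> nat set) set" where
  "edges G F = {(j,p). p \<in> F \<and> j \<in> G \<and> j \<notin> p \<and> insert j p \<in> F}"

lemma proj_shattered_mono:
  assumes "proj X S \<subseteq> proj Y S" "shattered X S" shows "shattered Y S"
  using assms unfolding shattered_def proj_def by auto

lemma edges_finite: "finite G \<Longrightarrow> F \<subseteq> Pow G \<Longrightarrow> finite (edges G F)"
  by (rule finite_subset[of _ "G \<times> F"]) (auto simp: edges_def intro: finite_subset[of F "Pow G"])

lemma edge_bound:
  assumes "finite G"
  shows "F \<subseteq> Pow G \<Longrightarrow> (\<forall>S. S \<subseteq> G \<and> shattered F S \<longrightarrow> card S \<le> d)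
     \<Longrightarrow> card (edges G F) \<le> d * card F"
  using assms
proof (induction G arbitrary: F d rule: finite_induct)
  case empty
  then show ?case by (simp add: edges_def)
next
  case (insert a G)
  note F = insert.prems(1) and vc = insert.prems(2)
  have finF: "finite F" using F insert.hyps(1) by (meson finite_Pow_iff finite_insert finite_subset)
  define F1 where "F1 = (\<lambda>p. p - {a}) ` F"
  define F2 where "F2 = {p \<in> F. a \<notin> p \<and> insert a p \<in> F}"
  have F1sub: "F1 \<subseteq> Pow G" using F unfolding F1_def by auto
  have F2sub: "F2 \<subseteq> Pow G" using F unfolding F2_def by auto
  define A0 where "A0 = {p \<in> F. a \<notin> p}"
  define A1 where "A1 = {p \<in> F. a \<in> p}"
  have cF: "card F = card A0 + card A1"
    unfolding A0_def A1_def using finF by (subst card_Un_disjoint[symmetric]) (auto intro: arg_cong[where f=card])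
  have FA: "F = A0 \<union> A1" unfolding A0_def A1_def by auto
  have A0id: "(\<lambda>p. p - {a}) ` A0 = A0" unfolding A0_def by (auto simp: image_iff)
  have F1eq: "F1 = A0 \<union> (\<lambda>p. p - {a}) ` A1" unfolding F1_def by (subst FA, subst image_Un, simp add: A0id)
  have injA1: "inj_on (\<lambda>p. p - {a}) A1" unfolding A1_def inj_on_def by blast
  have IntF2: "A0 \<inter> (\<lambda>p. p - {a}) ` A1 = F2"
  proof
    show "A0 \<inter> (\<lambda>p. p - {a}) ` A1 \<subseteq> F2"
    proof
      fix q assume "q \<in> A0 \<inter> (\<lambda>p. p - {a}) ` A1"
      then obtain p where "q \<in> F" "a \<notin> q" "p \<in> F" "a \<in> p" "q = p - {a}" unfolding A0_def A1_def by auto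
      moreover have "insert a q = p" using calculation by auto
      ultimately show "q \<in> F2" unfolding F2_def by auto
    qed
    show "F2 \<subseteq> A0 \<inter> (\<lambda>p. p - {a}) ` A1"
    proof
      fix q assume q: "q \<in> F2"
      hence "q = insert a q - {a}" unfolding F2_def by auto
      thus "q \<in> A0 \<inter> (\<lambda>p. p - {a}) ` A1" using q unfolding F2_def A0_def A1_def by blast
    qed
  qed
  have finA0: "finite A0" "finite A1" using finF unfolding A0_def A1_def by auto
  have "card F1 + card F2 = card A0 + card A1"
    using card_Un_Int[OF finA0(1) finite_imageI[OF finA0(2), of "\<lambda>p. p - {a}"]] card_image[OF injA1] F1eq IntF2 by simp
  hence cF12: "card F = card F1 + card F2" using cF by simp
  have vc1: "\<forall>S. S \<subseteq> G \<and> shattered F1 S \<longrightarrow> card S \<le> d"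
  proof (intro allI impI)
    fix S assume S: "S \<subseteq> G \<and> shattered F1 S"
    have "proj F1 S \<subseteq> proj F S" using S insert.hyps(2) unfolding proj_def F1_def by auto
    hence "shattered F S" using S proj_shattered_mono by blast
    thus "card S \<le> d" using vc S by auto
  qed
  have IH1: "card (edges G F1) \<le> d * card F1" using insert.IH[OF F1sub vc1] by simp
  have sh2: "shattered F (insert a S)" if "S \<subseteq> G" "shattered F2 S" for S
  proof -
    have "Pow (insert a S) \<subseteq> proj F (insert a S)"
    proof
      fix X assume X: "X \<in> Pow (insert a S)"
      have "X - {a} \<in> proj F2 S" using X that(2) unfolding shattered_def by auto
      then obtain q where q: "q \<in> F2" "X - {a} = q \<inter> S" unfolding proj_def by auto
      have qG: "q \<subseteq> G" using q F2sub by auto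
      show "X \<in> proj F (insert a S)"
      proof (cases "a \<in> X")
        case True
        hence "X = insert a q \<inter> insert a S" using q X by auto
        moreover have "insert a q \<in> F" using q unfolding F2_def by auto
        ultimately show ?thesis unfolding proj_def by auto
      next
        case False
        hence "X = q \<inter> insert a S" using q X qG insert.hyps(2) by auto
        moreover have "q \<in> F" using q unfolding F2_def by auto
        ultimately show ?thesis unfolding proj_def by auto
      qed
    qed
    thus ?thesis unfolding shattered_def proj_def by auto
  qed
  have E2: "card (edges G F2) + card F2 \<le> d * card F2"
  proof (cases "F2 = {}")
    case True then show ?thesis by (simp add: edges_def)
  next
    case False
    have "shattered F2 {}" using False unfolding shattered_def proj_def by auto
    hence "card (insert a {}) \<le> d" using sh2[of "{}"] vc insert.hyps by auto
    hence d1: "d \<ge> 1" by simp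
    have vc2: "\<forall>S. S \<subseteq> G \<and> shattered F2 S \<longrightarrow> card S \<le> d - 1"
    proof (intro allI impI)
      fix S assume S: "S \<subseteq> G \<and> shattered F2 S"
      have "shattered F (insert a S)" using sh2 S by blast
      moreover have "insert a S \<subseteq> insert a G" using S by blast
      ultimately have "card (insert a S) \<le> d" using vc by blast
      moreover have "card (insert a S) = Suc (card S)"
        using S insert.hyps by (metis card_insert_disjoint finite_subset subsetD)
      ultimately show "card S \<le> d - 1" by simp
    qed
    have "card (edges G F2) \<le> (d - 1) * card F2" using insert.IH[OF F2sub vc2] by simp
    thus ?thesis using d1 by (metis add.commute le_add_diff_inverse2 add_le_cancel_left mult_Suc Suc_diff_1 less_le_trans zero_less_one)
  qed
  define E where "E = edges (insert a G) F"
  define Ea where "Ea = {x \<in> E. fst x = a}"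
  define E1a where "E1a = {x \<in> E. fst x \<in> G \<and> a \<notin> snd x}"
  define E1b where "E1b = {x \<in> E. fst x \<in> G \<and> a \<in> snd x}"
  define h where "h = (\<lambda>(j::nat,p::nat set). (j, p - {a}))"
  have finE: "finite E" unfolding E_def using edges_finite F insert.hyps by auto
  have Esplit: "E = Ea \<union> (E1a \<union> E1b)" unfolding E_def Ea_def E1a_def E1b_def edges_def by auto
  have finEs: "finite Ea" "finite E1a" "finite E1b" using finE unfolding Ea_def E1a_def E1b_def by auto
  have c1: "card (E1a \<union> E1b) = card E1a + card E1b"
    by (rule card_Un_disjoint[OF finEs(2,3)]) (auto simp: E1a_def E1b_def)
  have c2: "card (Ea \<union> (E1a \<union> E1b)) = card Ea + card (E1a \<union> E1b)"
    by (rule card_Un_disjoint) (use finEs insert.hyps(2) in \<open>auto simp: Ea_def E1a_def E1b_def\<close>)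
  have cE: "card E = card Ea + card E1a + card E1b"
    using Esplit c1 c2 by simp
  have "Ea = (\<lambda>p. (a,p)) ` F2" unfolding Ea_def E_def F2_def edges_def by auto
  hence cEa: "card Ea = card F2" by (simp add: card_image inj_on_def)
  have E1a_sub: "E1a \<subseteq> edges G F1"
  proof
    fix x assume x: "x \<in> E1a"
    obtain j p where jp: "x = (j,p)" by (cases x)
    have h: "p \<in> F" "j \<in> G" "j \<notin> p" "insert j p \<in> F" "a \<notin> p"
      using x jp unfolding E1a_def E_def edges_def by auto
    have ja: "j \<noteq> a" using h(2) insert.hyps(2) by auto
    have "p = p - {a}" using h(5) by auto
    hence "p \<in> F1" using h(1) unfolding F1_def by blast
    moreover have "insert j p = insert j p - {a}" using h(5) ja by auto
    hence "insert j p \<in> F1" using h(4) unfolding F1_def by blast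
    ultimately show "x \<in> edges G F1" using jp h unfolding edges_def by auto
  qed
  have injh: "inj_on h E1b"
  proof (rule inj_onI)
    fix x y assume "x \<in> E1b" "y \<in> E1b" "h x = h y"
    moreover obtain j p where "x = (j,p)" by (cases x)
    moreover obtain j' p' where "y = (j',p')" by (cases y)
    ultimately have "j = j'" "p - {a} = p' - {a}" "a \<in> p" "a \<in> p'" unfolding h_def E1b_def by auto
    hence "p = p'" by (metis insert_Diff)
    thus "x = y" using \<open>x = (j,p)\<close> \<open>y = (j',p')\<close> \<open>j = j'\<close> by simp
  qed
  have hE1b_sub: "h ` E1b \<subseteq> edges G F1"
  proof
    fix y assume "y \<in> h ` E1b"
    then obtain j p where jp: "(j,p) \<in> E1b" "y = (j, p - {a})" unfolding h_def by auto
    have hh: "p \<in> F" "j \<in> G" "j \<notin> p" "insert j p \<in> F" "a \<in> p"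
      using jp unfolding E1b_def E_def edges_def by auto
    have ja: "j \<noteq> a" using hh(2) insert.hyps(2) by auto
    have "p - {a} \<in> F1" using hh(1) unfolding F1_def by blast
    moreover have "insert j (p - {a}) = insert j p - {a}" using ja by auto
    hence "insert j (p - {a}) \<in> F1" using hh(4) unfolding F1_def by auto
    ultimately show "y \<in> edges G F1" using jp hh unfolding edges_def by auto
  qed
  have int_sub: "E1a \<inter> h ` E1b \<subseteq> edges G F2"
  proof
    fix y assume y: "y \<in> E1a \<inter> h ` E1b"
    then obtain j p where jp: "(j,p) \<in> E1b" "y = (j, p - {a})" unfolding h_def by auto
    have hh: "p \<in> F" "j \<in> G" "j \<notin> p" "insert j p \<in> F" "a \<in> p"
      using jp unfolding E1b_def E_def edges_def by auto
    define q where "q = p - {a}"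
    have hq: "q \<in> F" "insert j q \<in> F" using y jp unfolding q_def E1a_def E_def edges_def by auto
    have ja: "j \<noteq> a" using hh(2) insert.hyps(2) by auto
    have pq: "p = insert a q" using hh(5) unfolding q_def by auto
    have "q \<in> F2" using hq(1) hh(1) pq unfolding F2_def q_def by auto
    moreover have "insert j q \<in> F2"
    proof -
      have "insert a (insert j q) = insert j p" using pq by auto
      moreover have "a \<notin> insert j q" using ja unfolding q_def by auto
      ultimately show ?thesis using hq(2) hh(4) unfolding F2_def by auto
    qed
    ultimately show "y \<in> edges G F2" using jp hh unfolding edges_def q_def by auto
  qed
  have finE1: "finite E1a" "finite E1b" using finE unfolding E1a_def E1b_def by auto
  have finG: "finite (edges G F1)" "finite (edges G F2)" using edges_finite F1sub F2sub insert.hyps by auto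
  have "card E1a + card E1b = card (E1a \<union> h ` E1b) + card (E1a \<inter> h ` E1b)"
    using card_Un_Int[OF finE1(1) finite_imageI[OF finE1(2), of h]] card_image[OF injh] by simp
  also have "\<dots> \<le> card (edges G F1) + card (edges G F2)"
    using card_mono[OF finG(1)] card_mono[OF finG(2)] E1a_sub hE1b_sub int_sub
    by (meson Un_least add_le_mono)
  finally have "card E \<le> card F2 + card (edges G F1) + card (edges G F2)" using cE cEa by simp
  thus ?case using IH1 E2 cF12 unfolding E_def by (simp add: algebra_simps)
qed



lemma card_filter_sum: "finite A \<Longrightarrow> card {x\<in>A. P x} = (\<Sum>x\<in>A. if P x then 1 else 0)"
  by (simp add: sum.If_cases Int_def)

lemma card_filter_real: "finite A \<Longrightarrow> real (card {x\<in>A. P x}) = (\<Sum>x\<in>A. if P x then 1 else 0)"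
  by (simp add: sum.If_cases Int_def)

lemma fiber_sum: "finite W \<Longrightarrow> finite T \<Longrightarrow> f ` W \<subseteq> T \<Longrightarrow> (\<Sum>y\<in>T. card {x\<in>W. f x = y}) = card W"
  using sum.group[of W T f "\<lambda>_. 1::nat"] by simp

lemma min_card: "x \<le> N \<Longrightarrow> y \<le> N \<Longrightarrow> min x y = card {t\<in>{1..N}. t \<le> x \<and> t \<le> y}"
proof -
  assume "x \<le> N" "y \<le> N"
  hence "{t\<in>{1..N}. t \<le> x \<and> t \<le> y} = {1..min x y}" by auto
  thus ?thesis by simp
qed

definition fib :: "nat set set \<Rightarrow> nat set \<Rightarrow> nat set \<Rightarrow> nat" where
  "fib W A p = card {u \<in> W. u \<inter> A = p}"

lemma weighted_edges:
  assumes fA: "finite A" and fW: "finite W" and vc: "\<forall>S. S \<subseteq> A \<and> shattered W S \<longrightarrow> card S \<le> d"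
  shows "(\<Sum>x\<in>(SIGMA j:A. Pow (A - {j})). min (fib W A (snd x)) (fib W A (insert (fst x) (snd x)))) \<le> d * card W"
proof -
  define N where "N = card W"
  define D where "D = (SIGMA j:A. Pow (A - {j}))"
  define P where "P t = {p \<in> Pow A. t \<le> fib W A p}" for t
  have fD: "finite D" unfolding D_def using fA by auto
  have fibN: "fib W A p \<le> N" for p unfolding fib_def N_def by (rule card_mono[OF fW]) auto
  have "(\<Sum>x\<in>D. min (fib W A (snd x)) (fib W A (insert (fst x) (snd x))))
      = (\<Sum>x\<in>D. card {t\<in>{1..N}. t \<le> fib W A (snd x) \<and> t \<le> fib W A (insert (fst x) (snd x))})"
    using fibN by (intro sum.cong refl min_card) auto
  also have "\<dots> = (\<Sum>x\<in>D. \<Sum>t\<in>{1..N}. if t \<le> fib W A (snd x) \<and> t \<le> fib W A (insert (fst x) (snd x)) then 1 else 0)"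
    by (rule sum.cong[OF refl], rule card_filter_sum, simp)
  also have "\<dots> = (\<Sum>t\<in>{1..N}. \<Sum>x\<in>D. if t \<le> fib W A (snd x) \<and> t \<le> fib W A (insert (fst x) (snd x)) then 1 else 0)"
    by (rule sum.swap)
  also have "\<dots> = (\<Sum>t\<in>{1..N}. card (edges A (P t)))"
  proof (rule sum.cong[OF refl])
    fix t assume t: "t \<in> {1..N}"
    have "{x\<in>D. t \<le> fib W A (snd x) \<and> t \<le> fib W A (insert (fst x) (snd x))} = edges A (P t)"
    proof (rule set_eqI)
      fix x :: "nat \<times> nat set"
      obtain j p where x: "x = (j,p)" by (cases x)
      show "x \<in> {x\<in>D. t \<le> fib W A (snd x) \<and> t \<le> fib W A (insert (fst x) (snd x))} \<longleftrightarrow> x \<in> edges A (P t)"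
        unfolding x D_def P_def edges_def by auto
    qed
    thus "(\<Sum>x\<in>D. if t \<le> fib W A (snd x) \<and> t \<le> fib W A (insert (fst x) (snd x)) then 1 else 0) = card (edges A (P t))"
      using card_filter_sum[OF fD, of "\<lambda>x. t \<le> fib W A (snd x) \<and> t \<le> fib W A (insert (fst x) (snd x))"] by simp
  qed
  also have "\<dots> \<le> (\<Sum>t\<in>{1..N}. d * card (P t))"
  proof (rule sum_mono)
    fix t assume t: "t \<in> {1..N}"
    have Psub: "P t \<subseteq> Pow A" unfolding P_def by auto
    have "\<forall>S. S \<subseteq> A \<and> shattered (P t) S \<longrightarrow> card S \<le> d"
    proof (intro allI impI)
      fix S assume S: "S \<subseteq> A \<and> shattered (P t) S"
      have "proj (P t) S \<subseteq> proj W S"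
      proof
        fix y assume "y \<in> proj (P t) S"
        then obtain p where p: "p \<in> P t" "y = p \<inter> S" unfolding proj_def by auto
        hence "fib W A p \<ge> 1" using t unfolding P_def by auto
        hence "{u \<in> W. u \<inter> A = p} \<noteq> {}" unfolding fib_def by (metis card.empty not_one_le_zero)
        then obtain u where "u \<in> W" "u \<inter> A = p" by auto
        hence "y = u \<inter> S" using p S by auto
        thus "y \<in> proj W S" using \<open>u \<in> W\<close> unfolding proj_def by auto
      qed
      hence "shattered W S" using S proj_shattered_mono by blast
      thus "card S \<le> d" using vc S by auto
    qed
    thus "card (edges A (P t)) \<le> d * card (P t)" using edge_bound[OF fA Psub] by blast
  qed
  also have "\<dots> = d * (\<Sum>t\<in>{1..N}. card (P t))" by (simp add: sum_distrib_left)
  also have "(\<Sum>t\<in>{1..N}. card (P t)) = (\<Sum>t\<in>{1..N}. \<Sum>p\<in>Pow A. if t \<le> fib W A p then 1 else 0)"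
    unfolding P_def by (rule sum.cong[OF refl], rule card_filter_sum) (use fA in auto)
  also have "\<dots> = (\<Sum>p\<in>Pow A. \<Sum>t\<in>{1..N}. if t \<le> fib W A p then 1 else 0)"
    by (rule sum.swap)
  also have "\<dots> = (\<Sum>p\<in>Pow A. fib W A p)"
  proof (rule sum.cong[OF refl])
    fix p assume "p \<in> Pow A"
    have "{t\<in>{1..N}. t \<le> fib W A p} = {1..fib W A p}" using fibN[of p] by auto
    thus "(\<Sum>t\<in>{1..N}. if t \<le> fib W A p then 1 else 0) = fib W A p"
      using card_filter_sum[of "{1..N}" "\<lambda>t. t \<le> fib W A p"] by simp
  qed
  also have "\<dots> = card W" unfolding fib_def using fA fW by (intro fiber_sum) auto
  finally show ?thesis unfolding D_def N_def by simp
qed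



lemma fiber_lower:
  assumes fG: "finite G" and FG: "F \<subseteq> Pow G" and Fne: "F \<noteq> {}" and BG: "B \<subseteq> G"
    and same: "\<forall>u\<in>F. \<forall>v\<in>F. u \<inter> B = v \<inter> B"
    and sep: "\<forall>u\<in>F. \<forall>v\<in>F. u \<noteq> v \<longrightarrow> \<delta> < hdist u v"
  shows "real (card F - 1) * real \<delta> / 2 \<le> (\<Sum>j\<in>G-B. real (min (card {u\<in>F. j\<notin>u}) (card {u\<in>F. j\<in>u})))"
proof -
  have finF: "finite F" using FG fG by (meson finite_Pow_iff finite_subset)
  define N where "N = card F"
  have N1: "N \<ge> 1" unfolding N_def using finF Fne by (simp add: Suc_le_eq card_gt_0_iff)
  define a where "a j = card {u\<in>F. j\<notin>u}" for j
  define b where "b j = card {u\<in>F. j\<in>u}" for j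
  have ab: "a j + b j = N" for j
  proof -
    have "F = {u\<in>F. j\<notin>u} \<union> {u\<in>F. j\<in>u}" by auto
    hence "card F = card {u\<in>F. j\<notin>u} + card {u\<in>F. j\<in>u}"
      using finF by (metis (no_types, lifting) card_Un_disjoint disjoint_iff finite_Un mem_Collect_eq)
    thus ?thesis unfolding a_def b_def N_def by simp
  qed
  have key1: "real (a j) * real (b j) \<le> real N * real (min (a j) (b j))" for j
  proof -
    have "real N = real (a j) + real (b j)" using ab[of j] by simp
    thus ?thesis by (cases "a j \<le> b j") (auto simp: min_def algebra_simps)
  qed
  have inner: "(\<Sum>u\<in>F. \<Sum>v\<in>F. (if (j\<in>u) \<noteq> (j\<in>v) then 1 else 0::real)) = 2 * real (a j) * real (b j)" for j
  proof -
    have "(\<Sum>u\<in>F. \<Sum>v\<in>F. (if (j\<in>u) \<noteq> (j\<in>v) then 1 else 0::real))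
        = (\<Sum>u\<in>F. if j \<in> u then real (a j) else real (b j))"
    proof (rule sum.cong[OF refl])
      fix u assume "u \<in> F"
      show "(\<Sum>v\<in>F. (if (j\<in>u) \<noteq> (j\<in>v) then 1 else 0::real)) = (if j \<in> u then real (a j) else real (b j))"
        unfolding a_def b_def using card_filter_real[OF finF, of "\<lambda>v. (j\<in>u) \<noteq> (j\<in>v)"] by auto
    qed
    also have "\<dots> = real (b j) * real (a j) + real (a j) * real (b j)"
      by (simp add: sum.If_cases finF a_def b_def Int_def)
    finally show ?thesis by simp
  qed
  have hd: "(\<Sum>j\<in>G-B. (if (j\<in>u) \<noteq> (j\<in>v) then 1 else 0::real)) = real (hdist u v)" if "u \<in> F" "v \<in> F" for u v
  proof -
    have "{j\<in>G-B. (j\<in>u) \<noteq> (j\<in>v)} = (u - v) \<union> (v - u)"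
      using that FG same by blast
    thus ?thesis unfolding hdist_def using card_filter_real[of "G-B" "\<lambda>j. (j\<in>u) \<noteq> (j\<in>v)"] fG by simp
  qed
  have "2 * (\<Sum>j\<in>G-B. real (a j) * real (b j)) = (\<Sum>j\<in>G-B. \<Sum>u\<in>F. \<Sum>v\<in>F. (if (j\<in>u) \<noteq> (j\<in>v) then 1 else 0::real))"
    unfolding sum_distrib_left by (rule sum.cong[OF refl], subst inner, simp)
  also have "\<dots> = (\<Sum>u\<in>F. \<Sum>j\<in>G-B. \<Sum>v\<in>F. (if (j\<in>u) \<noteq> (j\<in>v) then 1 else 0::real))"
    by (rule sum.swap)
  also have "\<dots> = (\<Sum>u\<in>F. \<Sum>v\<in>F. \<Sum>j\<in>G-B. (if (j\<in>u) \<noteq> (j\<in>v) then 1 else 0::real))"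
    by (rule sum.cong[OF refl], rule sum.swap)
  also have "\<dots> = (\<Sum>u\<in>F. \<Sum>v\<in>F. real (hdist u v))"
    by (intro sum.cong refl hd)
  also have "\<dots> \<ge> (\<Sum>u\<in>F. real (N - 1) * (real \<delta> + 1))"
  proof (rule sum_mono)
    fix u assume u: "u \<in> F"
    have s1: "(\<Sum>v\<in>F. real (hdist u v)) = (\<Sum>v\<in>F - {u}. real (hdist u v)) + real (hdist u u)"
      using u finF by (metis add.commute sum.remove)
    have s0: "real (hdist u u) = 0" unfolding hdist_def by simp
    have s2: "(\<Sum>v\<in>F - {u}. real (hdist u v)) \<ge> (\<Sum>v\<in>F - {u}. real \<delta> + 1)"
    proof (rule sum_mono)
      fix v assume "v \<in> F - {u}"
      hence "\<delta> < hdist u v" using sep u by auto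
      hence "Suc \<delta> \<le> hdist u v" by simp
      thus "real \<delta> + 1 \<le> real (hdist u v)" by (metis of_nat_Suc of_nat_le_iff add.commute)
    qed
    have s3: "(\<Sum>v\<in>F - {u}. real \<delta> + 1) = real (N - 1) * (real \<delta> + 1)"
      using u finF unfolding N_def by (simp add: card_Diff_singleton)
    show "real (N - 1) * (real \<delta> + 1) \<le> (\<Sum>v\<in>F. real (hdist u v))" using s0 s1 s2 s3 by linarith
  qed
  finally have "2 * (\<Sum>j\<in>G-B. real (a j) * real (b j)) \<ge> real N * (real (N - 1) * (real \<delta> + 1))"
    unfolding N_def by simp
  moreover have "(\<Sum>j\<in>G-B. real (a j) * real (b j)) \<le> real N * (\<Sum>j\<in>G-B. real (min (a j) (b j)))"
    unfolding sum_distrib_left by (rule sum_mono) (rule key1)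
  ultimately have "real N * (real (N - 1) * (real \<delta> + 1)) \<le> real N * (2 * (\<Sum>j\<in>G-B. real (min (a j) (b j))))"
    by linarith
  hence "real (N - 1) * (real \<delta> + 1) \<le> 2 * (\<Sum>j\<in>G-B. real (min (a j) (b j)))"
    by (rule mult_left_le_imp_le) (use N1 in auto)
  moreover have "real (N - 1) * real \<delta> \<le> real (N - 1) * (real \<delta> + 1)" by (simp add: mult_left_mono)
  ultimately have "real (N - 1) * real \<delta> / 2 \<le> (\<Sum>j\<in>G-B. real (min (a j) (b j)))" by linarith
  thus ?thesis unfolding a_def b_def N_def .
qed

definition Phi :: "nat set set \<Rightarrow> nat set \<Rightarrow> nat \<Rightarrow> nat" where
  "Phi W B j = (\<Sum>w\<in>Pow B. min (card {u\<in>W. u \<inter> B = w \<and> j \<notin> u}) (card {u\<in>W. u \<inter> B = w \<and> j \<in> u}))"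

lemma lower_B:
  assumes fG: "finite G" and WG: "W \<subseteq> Pow G" and sep: "separated \<delta> W" and BG: "B \<subseteq> G"
  shows "real \<delta> / 2 * (real (card W) - real (card (proj W B))) \<le> (\<Sum>j\<in>G-B. real (Phi W B j))"
proof -
  have finW: "finite W" using WG fG by (meson finite_Pow_iff finite_subset)
  have fB: "finite B" using BG fG finite_subset by auto
  define g where "g w j = real (min (card {u\<in>W. u \<inter> B = w \<and> j \<notin> u}) (card {u\<in>W. u \<inter> B = w \<and> j \<in> u}))" for w j
  have "(\<Sum>j\<in>G-B. real (Phi W B j)) = (\<Sum>j\<in>G-B. \<Sum>w\<in>Pow B. g w j)"
    unfolding Phi_def g_def by simp
  also have "\<dots> = (\<Sum>w\<in>Pow B. \<Sum>j\<in>G-B. g w j)" by (rule sum.swap)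
  also have "\<dots> = (\<Sum>w\<in>proj W B. \<Sum>j\<in>G-B. g w j)"
  proof (rule sum.mono_neutral_right)
    show "finite (Pow B)" using fB by simp
    show "proj W B \<subseteq> Pow B" unfolding proj_def by auto
    show "\<forall>w\<in>Pow B - proj W B. (\<Sum>j\<in>G-B. g w j) = 0"
    proof
      fix w assume "w \<in> Pow B - proj W B"
      hence e: "\<forall>u\<in>W. u \<inter> B \<noteq> w" unfolding proj_def by auto
      have E: "{u\<in>W. u \<inter> B = w \<and> j \<notin> u} = {}" "{u\<in>W. u \<inter> B = w \<and> j \<in> u} = {}" for j using e by auto
      show "(\<Sum>j\<in>G-B. g w j) = 0" unfolding g_def by (intro sum.neutral ballI, subst E(1), subst E(2), simp)
    qed
  qed
  also have "\<dots> \<ge> (\<Sum>w\<in>proj W B. real (card {u\<in>W. u \<inter> B = w} - 1) * real \<delta> / 2)"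
  proof (rule sum_mono)
    fix w assume w: "w \<in> proj W B"
    define F where "F = {u\<in>W. u \<inter> B = w}"
    have h1: "F \<noteq> {}" using w unfolding F_def proj_def by auto
    have h2: "F \<subseteq> Pow G" using WG unfolding F_def by auto
    have h3: "\<forall>u\<in>F. \<forall>v\<in>F. u \<inter> B = v \<inter> B" unfolding F_def by auto
    have h4: "\<forall>u\<in>F. \<forall>v\<in>F. u \<noteq> v \<longrightarrow> \<delta> < hdist u v"
      using sep unfolding F_def separated_def by blast
    have L1: "real (card F - 1) * real \<delta> / 2 \<le> (\<Sum>j\<in>G-B. real (min (card {u\<in>F. j\<notin>u}) (card {u\<in>F. j\<in>u})))"
      by (rule fiber_lower[OF fG h2 h1 BG h3 h4])
    have e1: "{u\<in>F. j\<notin>u} = {u\<in>W. u \<inter> B = w \<and> j \<notin> u}" for j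
      unfolding F_def by blast
    have e2: "{u\<in>F. j\<in>u} = {u\<in>W. u \<inter> B = w \<and> j \<in> u}" for j
      unfolding F_def by blast
    have "(\<Sum>j\<in>G-B. real (min (card {u\<in>F. j\<notin>u}) (card {u\<in>F. j\<in>u}))) = (\<Sum>j\<in>G-B. g w j)"
      unfolding g_def e1 e2 ..
    thus "real (card {u\<in>W. u \<inter> B = w} - 1) * real \<delta> / 2 \<le> (\<Sum>j\<in>G-B. g w j)"
      using L1 unfolding F_def by linarith
  qed
  finally have L: "(\<Sum>w\<in>proj W B. real (card {u\<in>W. u \<inter> B = w} - 1) * real \<delta> / 2) \<le> (\<Sum>j\<in>G-B. real (Phi W B j))" .
  have finP: "finite (proj W B)" unfolding proj_def using finW by simp
  have pos: "card {u\<in>W. u \<inter> B = w} \<ge> 1" if "w \<in> proj W B" for w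
  proof -
    have "{u\<in>W. u \<inter> B = w} \<noteq> {}" using that unfolding proj_def by auto
    thus ?thesis using finW by (simp add: Suc_le_eq card_gt_0_iff)
  qed
  have "(\<Sum>w\<in>proj W B. real (card {u\<in>W. u \<inter> B = w} - 1) * real \<delta> / 2)
      = real \<delta> / 2 * ((\<Sum>w\<in>proj W B. real (card {u\<in>W. u \<inter> B = w})) - real (card (proj W B)))"
  proof -
    have "(\<Sum>w\<in>proj W B. real (card {u\<in>W. u \<inter> B = w} - 1) * real \<delta> / 2)
        = (\<Sum>w\<in>proj W B. real \<delta> / 2 * real (card {u\<in>W. u \<inter> B = w}) - real \<delta> / 2)"
    proof (rule sum.cong[OF refl])
      fix w assume "w \<in> proj W B"
      hence "real (card {u\<in>W. u \<inter> B = w} - 1) = real (card {u\<in>W. u \<inter> B = w}) - 1"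
        using pos by (simp add: of_nat_diff)
      thus "real (card {u\<in>W. u \<inter> B = w} - 1) * real \<delta> / 2 = real \<delta> / 2 * real (card {u\<in>W. u \<inter> B = w}) - real \<delta> / 2"
        by (simp add: field_simps)
    qed
    also have "\<dots> = real \<delta> / 2 * (\<Sum>w\<in>proj W B. real (card {u\<in>W. u \<inter> B = w})) - real \<delta> / 2 * real (card (proj W B))"
      by (simp add: sum_subtractf sum_distrib_left)
    finally show ?thesis by (simp add: right_diff_distrib)
  qed
  also have "(\<Sum>w\<in>proj W B. real (card {u\<in>W. u \<inter> B = w})) = real (card W)"
  proof -
    have fs: "(\<Sum>w\<in>proj W B. card {u\<in>W. u \<inter> B = w}) = card W"
      by (rule fiber_sum[OF finW finP]) (simp add: proj_def)
    show ?thesis by (subst of_nat_sum[symmetric]) (simp only: fs)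
  qed
  finally show ?thesis using L by simp
qed



lemma double_count:
  assumes fG: "finite G"
  shows "(\<Sum>B\<in>{B. B \<subseteq> G \<and> card B = m}. \<Sum>j\<in>G-B. g B j)
       = (\<Sum>A\<in>{A. A \<subseteq> G \<and> card A = Suc m}. \<Sum>j\<in>A. g (A - {j}) j)"
proof -
  define S where "S = (SIGMA B:{B. B \<subseteq> G \<and> card B = m}. G - B)"
  define T where "T = (SIGMA A:{A. A \<subseteq> G \<and> card A = Suc m}. A)"
  have f1: "finite {B. B \<subseteq> G \<and> card B = m}" by (rule finite_subset[of _ "Pow G"]) (use fG in auto)
  have f2: "finite {A. A \<subseteq> G \<and> card A = Suc m}" by (rule finite_subset[of _ "Pow G"]) (use fG in auto)
  have "(\<Sum>B\<in>{B. B \<subseteq> G \<and> card B = m}. \<Sum>j\<in>G-B. g B j) = (\<Sum>(B,j)\<in>S. g B j)"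
    unfolding S_def by (rule sum.Sigma[OF f1]) (use fG in auto)
  also have "\<dots> = (\<Sum>(A,j)\<in>T. g (A - {j}) j)"
  proof (rule sum.reindex_bij_witness[where i="\<lambda>(A,j). (A - {j}, j)" and j="\<lambda>(B,j). (insert j B, j)"])
    fix a assume "a \<in> S"
    then obtain B j where a: "a = (B,j)" "B \<subseteq> G" "card B = m" "j \<in> G" "j \<notin> B" unfolding S_def by auto
    have fB: "finite B" using a fG finite_subset by auto
    show "(\<lambda>(A,j). (A - {j}, j)) ((\<lambda>(B,j). (insert j B, j)) a) = a" using a by auto
    show "(\<lambda>(B,j). (insert j B, j)) a \<in> T" using a fB unfolding T_def by auto
    show "(\<lambda>(A,j). g (A - {j}) j) ((\<lambda>(B,j). (insert j B, j)) a) = (\<lambda>(B,j). g B j) a" using a by auto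
  next
    fix b assume "b \<in> T"
    then obtain A j where b: "b = (A,j)" "A \<subseteq> G" "card A = Suc m" "j \<in> A" unfolding T_def by auto
    have fA: "finite A" using b fG finite_subset by auto
    show "(\<lambda>(B,j). (insert j B, j)) ((\<lambda>(A,j). (A - {j}, j)) b) = b" using b by auto
    show "(\<lambda>(A,j). (A - {j}, j)) b \<in> S" using b fA unfolding S_def by auto
  qed
  also have "\<dots> = (\<Sum>A\<in>{A. A \<subseteq> G \<and> card A = Suc m}. \<Sum>j\<in>A. g (A - {j}) j)"
    unfolding T_def by (rule sum.Sigma[OF f2, symmetric]) (use fG in \<open>auto intro: finite_subset\<close>)
  finally show ?thesis .
qed

lemma upper_A:
  assumes fA: "finite A" and fW: "finite W" and vc: "\<forall>S. S \<subseteq> A \<and> shattered W S \<longrightarrow> card S \<le> d"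
  shows "(\<Sum>j\<in>A. Phi W (A - {j}) j) \<le> d * card W"
proof -
  have "(\<Sum>j\<in>A. Phi W (A - {j}) j) = (\<Sum>j\<in>A. \<Sum>w\<in>Pow (A - {j}). min (fib W A w) (fib W A (insert j w)))"
  proof (rule sum.cong[OF refl])
    fix j assume j: "j \<in> A"
    show "Phi W (A - {j}) j = (\<Sum>w\<in>Pow (A - {j}). min (fib W A w) (fib W A (insert j w)))"
      unfolding Phi_def
    proof (rule sum.cong[OF refl])
      fix w assume w: "w \<in> Pow (A - {j})"
      have "{u\<in>W. u \<inter> (A - {j}) = w \<and> j \<notin> u} = {u\<in>W. u \<inter> A = w}" using w j by blast
      moreover have "{u\<in>W. u \<inter> (A - {j}) = w \<and> j \<in> u} = {u\<in>W. u \<inter> A = insert j w}" using w j by blast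
      ultimately show "min (card {u\<in>W. u \<inter> (A - {j}) = w \<and> j \<notin> u}) (card {u\<in>W. u \<inter> (A - {j}) = w \<and> j \<in> u})
          = min (fib W A w) (fib W A (insert j w))" unfolding fib_def by simp
    qed
  qed
  also have "\<dots> = (\<Sum>x\<in>(SIGMA j:A. Pow (A - {j})). min (fib W A (snd x)) (fib W A (insert (fst x) (snd x))))"
    by (subst sum.Sigma) (use fA in \<open>auto simp: case_prod_beta\<close>)
  also have "\<dots> \<le> d * card W" by (rule weighted_edges[OF fA fW vc])
  finally show ?thesis .
qed



lemma sampling:
  assumes fG: "finite G" and WG: "W \<subseteq> Pow G" and sep: "separated \<delta> W" and dpos: "\<delta> > 0"
    and vc: "\<forall>S. S \<subseteq> G \<and> shattered W S \<longrightarrow> card S \<le> d0"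
    and mbig: "4 * real d0 * real (card G) \<le> real \<delta> * real (Suc m)"
  shows "real (card {B. B \<subseteq> G \<and> card B = m}) * real (card W)
     \<le> 2 * (\<Sum>B\<in>{B. B \<subseteq> G \<and> card B = m}. real (card (proj W B)))"
proof -
  define Bs where "Bs = {B. B \<subseteq> G \<and> card B = m}"
  define Bs1 where "Bs1 = {A. A \<subseteq> G \<and> card A = Suc m}"
  define n where "n = card G"
  define X where "X = real (card Bs) * real (card W)"
  define S where "S = (\<Sum>B\<in>Bs. real (card (proj W B)))"
  have fBs: "finite Bs" unfolding Bs_def by (rule finite_subset[of _ "Pow G"]) (use fG in auto)
  have fBs1: "finite Bs1" unfolding Bs1_def by (rule finite_subset[of _ "Pow G"]) (use fG in auto)
  have fW: "finite W" using WG fG by (meson finite_Pow_iff finite_subset)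
  have "(\<Sum>B\<in>Bs. real \<delta> / 2 * (real (card W) - real (card (proj W B))))
      \<le> (\<Sum>B\<in>Bs. \<Sum>j\<in>G-B. real (Phi W B j))"
    by (rule sum_mono, rule lower_B[OF fG WG sep]) (auto simp: Bs_def)
  also have "\<dots> = (\<Sum>A\<in>Bs1. \<Sum>j\<in>A. real (Phi W (A - {j}) j))"
    unfolding Bs_def Bs1_def by (rule double_count[OF fG])
  also have "\<dots> \<le> (\<Sum>A\<in>Bs1. real (d0 * card W))"
  proof (rule sum_mono)
    fix A assume A: "A \<in> Bs1"
    hence AG: "A \<subseteq> G" unfolding Bs1_def by auto
    have "(\<Sum>j\<in>A. Phi W (A - {j}) j) \<le> d0 * card W"
      by (rule upper_A) (use AG fG fW vc in \<open>auto intro: finite_subset\<close>)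
    hence "real (\<Sum>j\<in>A. Phi W (A - {j}) j) \<le> real (d0 * card W)" by (rule of_nat_mono)
    thus "(\<Sum>j\<in>A. real (Phi W (A - {j}) j)) \<le> real (d0 * card W)" by simp
  qed
  also have "\<dots> = real (card Bs1) * real d0 * real (card W)" by simp
  finally have a: "(\<Sum>B\<in>Bs. real \<delta> / 2 * (real (card W) - real (card (proj W B)))) \<le> real (card Bs1) * real d0 * real (card W)" .
  have lhs: "(\<Sum>B\<in>Bs. real \<delta> / 2 * (real (card W) - real (card (proj W B)))) = real \<delta> / 2 * X - real \<delta> / 2 * S"
    unfolding X_def S_def by (simp add: sum_subtractf sum_distrib_left right_diff_distrib)
  have cnt: "real (card Bs1) * real (Suc m) = real (card Bs) * real (n - m)"
  proof -
    have "(\<Sum>B\<in>Bs. \<Sum>j\<in>G-B. (1::real)) = (\<Sum>A\<in>Bs1. \<Sum>j\<in>A. (1::real))"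
      unfolding Bs_def Bs1_def by (rule double_count[OF fG])
    moreover have "(\<Sum>B\<in>Bs. \<Sum>j\<in>G-B. (1::real)) = (\<Sum>B\<in>Bs. real (n - m))"
    proof (rule sum.cong[OF refl])
      fix B assume "B \<in> Bs"
      hence B: "B \<subseteq> G" "card B = m" unfolding Bs_def by auto
      hence "card (G - B) = n - m" unfolding n_def using fG by (metis card_Diff_subset finite_subset)
      thus "(\<Sum>j\<in>G-B. (1::real)) = real (n - m)" by simp
    qed
    moreover have "(\<Sum>A\<in>Bs1. \<Sum>j\<in>A. (1::real)) = (\<Sum>A\<in>Bs1. real (Suc m))"
      by (rule sum.cong[OF refl]) (simp add: Bs1_def)
    ultimately show ?thesis by (simp add: mult.commute)
  qed
  have c1: "real (card Bs1) * real (Suc m) \<le> real (card Bs) * real n"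
    unfolding cnt by (rule mult_left_mono) auto
  have "(4 * real d0 * real (card W) * real (card Bs1)) * real (Suc m)
      = 4 * real d0 * real (card W) * (real (card Bs1) * real (Suc m))" by (simp add: algebra_simps)
  also have "\<dots> \<le> 4 * real d0 * real (card W) * (real (card Bs) * real n)"
    by (rule mult_left_mono[OF c1]) simp
  also have "\<dots> = X * (4 * real d0 * real n)" unfolding X_def by (simp add: algebra_simps)
  also have "\<dots> \<le> X * (real \<delta> * real (Suc m))"
    by (rule mult_left_mono) (use mbig in \<open>auto simp: n_def X_def\<close>)
  also have "\<dots> = (real \<delta> * X) * real (Suc m)" by (simp add: algebra_simps)
  finally have "4 * real d0 * real (card W) * real (card Bs1) \<le> real \<delta> * X"
    by (rule mult_right_le_imp_le) simp
  hence "real \<delta> * X \<le> real \<delta> * (2 * S)" using a lhs by (simp add: algebra_simps)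
  hence "X \<le> 2 * S" by (rule mult_left_le_imp_le) (use dpos in simp)
  thus ?thesis unfolding X_def S_def Bs_def .
qed



lemma count_containing:
  assumes fG: "finite G" and i: "i \<in> G" and m: "m \<ge> 1"
  shows "card {B. B \<subseteq> G \<and> card B = m \<and> i \<in> B} = (card G - 1) choose (m - 1)"
proof -
  have eq: "{B. B \<subseteq> G \<and> card B = m \<and> i \<in> B} = insert i ` {B'. B' \<subseteq> G - {i} \<and> card B' = m - 1}"
  proof
    show "{B. B \<subseteq> G \<and> card B = m \<and> i \<in> B} \<subseteq> insert i ` {B'. B' \<subseteq> G - {i} \<and> card B' = m - 1}"
    proof
      fix B assume B: "B \<in> {B. B \<subseteq> G \<and> card B = m \<and> i \<in> B}"
      have fB: "finite B" using B fG finite_subset by auto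
      have "B = insert i (B - {i})" using B by auto
      moreover have "card (B - {i}) = m - 1" using B fB by (simp add: card_Diff_singleton)
      ultimately show "B \<in> insert i ` {B'. B' \<subseteq> G - {i} \<and> card B' = m - 1}" using B by blast
    qed
    show "insert i ` {B'. B' \<subseteq> G - {i} \<and> card B' = m - 1} \<subseteq> {B. B \<subseteq> G \<and> card B = m \<and> i \<in> B}"
    proof
      fix B assume "B \<in> insert i ` {B'. B' \<subseteq> G - {i} \<and> card B' = m - 1}"
      then obtain B' where B': "B = insert i B'" "B' \<subseteq> G - {i}" "card B' = m - 1" by auto
      have fB: "finite B'" using B' fG finite_subset by blast
      have "i \<notin> B'" using B' by auto
      hence "card B = Suc (m - 1)" using B' fB by simp
      hence "card B = m" using m by simp
      thus "B \<in> {B. B \<subseteq> G \<and> card B = m \<and> i \<in> B}" using B' i by auto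
    qed
  qed
  have inj: "inj_on (insert i) {B'. B' \<subseteq> G - {i} \<and> card B' = m - 1}"
    unfolding inj_on_def by auto
  have "card {B. B \<subseteq> G \<and> card B = m \<and> i \<in> B} = card {B'. B' \<subseteq> G - {i} \<and> card B' = m - 1}"
    unfolding eq by (rule card_image[OF inj])
  also have "\<dots> = card (G - {i}) choose (m - 1)" by (rule n_subsets) (use fG in simp)
  also have "card (G - {i}) = card G - 1" using fG i by simp
  finally show ?thesis .
qed

lemma inter_sum:
  assumes fG: "finite G" and uG: "u \<subseteq> G" and m: "m \<ge> 1"
  shows "(\<Sum>B\<in>{B. B \<subseteq> G \<and> card B = m}. real (card (u \<inter> B))) = real (card u) * real ((card G - 1) choose (m - 1))"
proof -
  define Bs where "Bs = {B. B \<subseteq> G \<and> card B = m}"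
  have fBs: "finite Bs" unfolding Bs_def by (rule finite_subset[of _ "Pow G"]) (use fG in auto)
  have fu: "finite u" using uG fG finite_subset by auto
  have "(\<Sum>B\<in>Bs. real (card (u \<inter> B))) = (\<Sum>B\<in>Bs. \<Sum>i\<in>u. if i \<in> B then 1 else 0)"
  proof (rule sum.cong[OF refl])
    fix B assume "B \<in> Bs"
    have "u \<inter> B = {i\<in>u. i \<in> B}" by auto
    thus "real (card (u \<inter> B)) = (\<Sum>i\<in>u. if i \<in> B then 1 else 0)" using card_filter_real[OF fu, of "\<lambda>i. i \<in> B"] by simp
  qed
  also have "\<dots> = (\<Sum>i\<in>u. \<Sum>B\<in>Bs. if i \<in> B then 1 else 0)" by (rule sum.swap)
  also have "\<dots> = (\<Sum>i\<in>u. real ((card G - 1) choose (m - 1)))"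
  proof (rule sum.cong[OF refl])
    fix i assume i: "i \<in> u"
    have "{B\<in>Bs. i \<in> B} = {B. B \<subseteq> G \<and> card B = m \<and> i \<in> B}" unfolding Bs_def by auto
    hence "real (card {B\<in>Bs. i \<in> B}) = real ((card G - 1) choose (m - 1))"
      using count_containing[OF fG _ m, of i] i uG by auto
    thus "(\<Sum>B\<in>Bs. if i \<in> B then 1 else 0) = real ((card G - 1) choose (m - 1))"
      using card_filter_real[OF fBs, of "\<lambda>B. i \<in> B"] by simp
  qed
  also have "\<dots> = real (card u) * real ((card G - 1) choose (m - 1))" by simp
  finally show ?thesis unfolding Bs_def .
qed



lemma shallow:
  fixes d :: nat and d1 C :: real
  assumes n1: "n \<ge> 1" and VG: "V \<subseteq> Pow {..<n}" and cs: "clarkson_shor n V d d1 C"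
    and WV: "W \<subseteq> V" and sep: "separated \<delta> W" and dpos: "\<delta> > 0" and len: "\<forall>v\<in>W. vlen v \<le> k"
    and vc: "\<forall>S. S \<subseteq> {..<n} \<and> shattered W S \<longrightarrow> card S \<le> d0"
    and m1: "1 \<le> m" and mn: "m \<le> n" and mbig: "4 * real d0 * real n \<le> real \<delta> * real (Suc m)"
    and t1: "1 \<le> t'" and tbig: "4 * real k * real m \<le> real (Suc t') * real n"
  shows "real (card W) \<le> 4 * (C * real m powr d1 * real (min m t') powr (real d - d1))"
proof -
  define G where "G = {..<n::nat}"
  define Bs where "Bs = {B. B \<subseteq> G \<and> card B = m}"
  define t where "t = min m t'"
  define Q where "Q = C * real m powr d1 * real t powr (real d - d1)"
  define N where "N = card Bs"
  have fG: "finite G" and cardG: "card G = n" unfolding G_def by auto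
  have fBs: "finite Bs" unfolding Bs_def by (rule finite_subset[of _ "Pow G"]) (use fG in auto)
  have WG: "W \<subseteq> Pow G" using WV VG unfolding G_def by auto
  have fV: "finite V" using VG by (meson finite_Pow_iff finite_lessThan finite_subset)
  have fW: "finite W" using WV fV finite_subset by auto
  have NB: "N = n choose m" unfolding N_def Bs_def using n_subsets[OF fG] cardG by simp
  have Npos: "real N > 0" unfolding NB using mn by (simp add: zero_less_binomial)
  have samp: "real N * real (card W) \<le> 2 * (\<Sum>B\<in>Bs. real (card (proj W B)))"
    unfolding N_def Bs_def
    by (rule sampling[OF fG WG sep dpos]) (use vc mbig cardG in \<open>auto simp: G_def\<close>)
  have perB: "real (card (proj W B)) \<le> Q + real (card {u\<in>W. t' < card (u \<inter> B)})" if B: "B \<in> Bs" for B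
  proof -
    have BG: "B \<subseteq> G" and cB: "card B = m" using B unfolding Bs_def by auto
    have fB: "finite B" using BG fG finite_subset by auto
    define P1 where "P1 = {w\<in>proj V B. vlen w \<le> t}"
    define L where "L = {u\<in>W. t' < card (u \<inter> B)}"
    have sub: "proj W B \<subseteq> P1 \<union> (\<lambda>u. u \<inter> B) ` L"
    proof
      fix w assume "w \<in> proj W B"
      then obtain u where u: "u \<in> W" "w = u \<inter> B" unfolding proj_def by auto
      show "w \<in> P1 \<union> (\<lambda>u. u \<inter> B) ` L"
      proof (cases "card w \<le> t")
        case True
        hence "w \<in> P1" using u WV unfolding P1_def proj_def vlen_def by auto
        thus ?thesis by auto
      next
        case False
        have "card w \<le> m" using u cB card_mono[OF fB, of w] by auto
        hence "t' < card w" using False unfolding t_def by auto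
        hence "u \<in> L" using u unfolding L_def by auto
        thus ?thesis using u by auto
      qed
    qed
    have fP1: "finite P1" unfolding P1_def proj_def using fV by auto
    have fL: "finite L" unfolding L_def using fW by auto
    have "card (proj W B) \<le> card (P1 \<union> (\<lambda>u. u \<inter> B) ` L)"
      by (rule card_mono[OF _ sub]) (use fP1 fL in auto)
    also have "\<dots> \<le> card P1 + card ((\<lambda>u. u \<inter> B) ` L)" by (rule card_Un_le)
    also have "\<dots> \<le> card P1 + card L" using card_image_le[OF fL] by simp
    finally have c: "real (card (proj W B)) \<le> real (card P1) + real (card L)" by linarith
    have t1': "1 \<le> t" "t \<le> card B" unfolding t_def using m1 t1 cB by auto
    have "B \<subseteq> {..<n}" using BG unfolding G_def .
    hence "real (card P1) \<le> C * real (card B) powr d1 * real t powr (real d - d1)"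
      using cs t1' unfolding clarkson_shor_def P1_def by blast
    hence "real (card P1) \<le> Q" unfolding Q_def using cB by simp
    thus ?thesis using c unfolding L_def by linarith
  qed
  have "(\<Sum>B\<in>Bs. real (card (proj W B))) \<le> (\<Sum>B\<in>Bs. Q + real (card {u\<in>W. t' < card (u \<inter> B)}))"
    by (rule sum_mono) (rule perB)
  also have "\<dots> = real N * Q + (\<Sum>B\<in>Bs. real (card {u\<in>W. t' < card (u \<inter> B)}))"
    unfolding N_def by (simp add: sum.distrib)
  finally have S1: "(\<Sum>B\<in>Bs. real (card (proj W B))) \<le> real N * Q + (\<Sum>B\<in>Bs. real (card {u\<in>W. t' < card (u \<inter> B)}))" .
  have S2: "(\<Sum>B\<in>Bs. real (card {u\<in>W. t' < card (u \<inter> B)})) = (\<Sum>u\<in>W. real (card {B\<in>Bs. t' < card (u \<inter> B)}))"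
  proof -
    have "(\<Sum>B\<in>Bs. real (card {u\<in>W. t' < card (u \<inter> B)})) = (\<Sum>B\<in>Bs. \<Sum>u\<in>W. if t' < card (u \<inter> B) then 1 else 0)"
      by (rule sum.cong[OF refl]) (rule card_filter_real[OF fW])
    also have "\<dots> = (\<Sum>u\<in>W. \<Sum>B\<in>Bs. if t' < card (u \<inter> B) then 1 else 0)" by (rule sum.swap)
    also have "\<dots> = (\<Sum>u\<in>W. real (card {B\<in>Bs. t' < card (u \<inter> B)}))"
      by (rule sum.cong[OF refl]) (rule card_filter_real[OF fBs, symmetric])
    finally show ?thesis .
  qed
  have S3: "(\<Sum>u\<in>W. real (card {B\<in>Bs. t' < card (u \<inter> B)})) \<le> (\<Sum>u\<in>W. real N / 4)"
  proof (rule sum_mono)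
    fix u assume u: "u \<in> W"
    define cf where "cf = real (card {B\<in>Bs. t' < card (u \<inter> B)})"
    define bi where "bi = real ((card G - 1) choose (m - 1))"
    have uG: "u \<subseteq> G" using u WG by auto
    have "real (Suc t') * cf = (\<Sum>B\<in>{B\<in>Bs. t' < card (u \<inter> B)}. real (Suc t'))"
      unfolding cf_def by simp
    also have "\<dots> \<le> (\<Sum>B\<in>{B\<in>Bs. t' < card (u \<inter> B)}. real (card (u \<inter> B)))"
      by (rule sum_mono) auto
    also have "\<dots> \<le> (\<Sum>B\<in>Bs. real (card (u \<inter> B)))"
      by (rule sum_mono2[OF fBs]) auto
    also have "\<dots> = real (card u) * bi"
      unfolding Bs_def bi_def by (rule inter_sum[OF fG uG m1])
    also have "\<dots> \<le> real k * bi"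
      using len u unfolding vlen_def bi_def by (intro mult_right_mono) auto
    finally have a: "real (Suc t') * cf \<le> real k * bi" .
    have bin: "real m * real N = real n * bi"
      unfolding NB bi_def cardG using times_binomial_minus1_eq[of m n] m1
      by (metis of_nat_mult not_one_le_zero zero_less_iff_neq_zero)
    have "(real (Suc t') * cf) * real n \<le> (real k * bi) * real n"
      by (rule mult_right_mono[OF a]) simp
    also have "\<dots> = real k * (real m * real N)" using bin by (simp add: algebra_simps)
    also have "\<dots> = (4 * real k * real m) * (real N / 4)" by simp
    also have "\<dots> \<le> (real (Suc t') * real n) * (real N / 4)"
      by (rule mult_right_mono[OF tbig]) simp
    finally have "(real (Suc t') * real n) * cf \<le> (real (Suc t') * real n) * (real N / 4)"
      by (simp add: algebra_simps)
    moreover have "real (Suc t') * real n > 0" using n1 by simp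
    ultimately show "cf \<le> real N / 4" by (rule mult_left_le_imp_le)
  qed
  have S4: "(\<Sum>u\<in>W. real N / 4) = real (card W) * real N / 4" by simp
  have "(\<Sum>B\<in>Bs. real (card (proj W B))) \<le> real N * Q + real (card W) * real N / 4"
    using S1 S2 S3 S4 by linarith
  hence "real N * real (card W) \<le> real N * (4 * Q)" using samp by (simp add: algebra_simps)
  hence "real (card W) \<le> 4 * Q" using Npos by (rule mult_left_le_imp_le)
  thus ?thesis unfolding Q_def t_def .
qed



lemma powr_bound:
  fixes c n k \<delta> d1 :: real and d :: nat
  assumes "0 \<le> d1" "d1 \<le> real d" "0 \<le> x" "x \<le> c * n / \<delta>" "0 \<le> y" "y \<le> c * k / \<delta>"
    "c > 0" "n > 0" "k > 0" "\<delta> > 0"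
  shows "x powr d1 * y powr (real d - d1) \<le> c ^ d * (n powr d1 * k powr (real d - d1)) / \<delta> ^ d"
proof -
  have "x powr d1 * y powr (real d - d1) \<le> (c * n / \<delta>) powr d1 * (c * k / \<delta>) powr (real d - d1)"
    using assms by (intro mult_mono powr_mono2) auto
  also have "\<dots> = (c powr d1 * c powr (real d - d1)) * (n powr d1 * k powr (real d - d1)) / (\<delta> powr d1 * \<delta> powr (real d - d1))"
    by (simp add: powr_mult powr_divide)
  also have "c powr d1 * c powr (real d - d1) = c ^ d"
    using assms by (simp add: powr_add[symmetric] powr_realpow)
  also have "\<delta> powr d1 * \<delta> powr (real d - d1) = \<delta> ^ d"
    using assms by (simp add: powr_add[symmetric] powr_realpow)
  finally show ?thesis .
qed

theorem theorem2:
  fixes d d0 :: nat and d1 C :: real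
  assumes "d > 0" and "1 \<le> d1" and "d1 \<le> real d" and "C > 0"
  shows "\<exists>K>0. \<forall>(n::nat) (V::nat set set) (\<delta>::nat) (k::nat).
           n \<ge> 1 \<and> V \<subseteq> Pow {..<n} \<and> clarkson_shor n V d d1 C \<and> vc_dim n V = d0 \<and>
           1 \<le> \<delta> \<and> real \<delta> \<le> real n / 2 ^ (d0 + 1) \<and>
           1 \<le> k \<and> k \<le> n \<and> real \<delta> / 2 \<le> real k
           \<longrightarrow> real (Mpack \<delta> k V) \<le> K * real n powr d1 * real k powr (real d - d1) / real \<delta> ^ d"
proof -
  note dd1 = assms(3) and d1pos = assms(2) and Cpos = assms(4)
  define c :: real where "c = 22 * (real d0 + 1)"
  define K where "K = 4 * C * c ^ d"
  have cpos: "c > 0" unfolding c_def by simp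
  have Kpos: "K > 0" unfolding K_def using Cpos cpos by simp
  show ?thesis
  proof (intro exI[of _ K] conjI allI impI Kpos)
    fix n :: nat and V :: "nat set set" and \<delta> k :: nat
    assume H: "n \<ge> 1 \<and> V \<subseteq> Pow {..<n} \<and> clarkson_shor n V d d1 C \<and> vc_dim n V = d0 \<and>
           1 \<le> \<delta> \<and> real \<delta> \<le> real n / 2 ^ (d0 + 1) \<and>
           1 \<le> k \<and> k \<le> n \<and> real \<delta> / 2 \<le> real k"
    have n1: "n \<ge> 1" and VG: "V \<subseteq> Pow {..<n}" and cs: "clarkson_shor n V d d1 C"
      and vcd: "vc_dim n V = d0" and d1': "1 \<le> \<delta>" and dn: "real \<delta> \<le> real n / 2 ^ (d0 + 1)"
      and k1: "1 \<le> k" and kn: "k \<le> n" and dk: "real \<delta> / 2 \<le> real k" using H by auto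
    define P where "P = real n powr d1 * real k powr (real d - d1)"
    have Pnn: "P \<ge> 0" unfolding P_def by simp
    have dlen: "real \<delta> \<le> real n"
    proof -
      have "(1::real) \<le> 2 ^ (d0 + 1)" by (rule one_le_power) simp
      hence "real n / 2 ^ (d0 + 1) \<le> real n / 1" by (intro divide_left_mono) auto
      thus ?thesis using dn by linarith
    qed
    have fV: "finite V" using VG by (meson finite_Pow_iff finite_lessThan finite_subset)
    have bound: "real (card W) \<le> K * P / real \<delta> ^ d"
      if W: "W \<subseteq> V" "separated \<delta> W" "\<forall>v\<in>W. vlen v \<le> k" for W
    proof -
      have fW: "finite W" using W fV finite_subset by auto
      have vc: "\<forall>S. S \<subseteq> {..<n} \<and> shattered W S \<longrightarrow> card S \<le> d0"
      proof (intro allI impI)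
        fix S assume S: "S \<subseteq> {..<n} \<and> shattered W S"
        have "proj W S \<subseteq> proj V S" using W unfolding proj_def by auto
        hence "shattered V S" using S proj_shattered_mono by blast
        hence mem: "card S \<in> {card I | I. I \<subseteq> {..<n} \<and> shattered V I}" using S by auto
        have "bdd_above {card I | I. I \<subseteq> {..<n} \<and> shattered V I}"
          by (rule bdd_aboveI[of _ n]) (auto dest: card_mono[OF finite_lessThan])
        hence "card S \<le> vc_dim n V" unfolding vc_dim_def using mem by (rule cSup_upper[rotated])
        thus "card S \<le> d0" using vcd by simp
      qed
      have dpos: "real \<delta> > 0" using d1' by simp
      have kpos: "real k > 0" using k1 by simp
      have npos: "real n > 0" using n1 by simp
      show ?thesis
      proof (cases "real \<delta> < 4 * (real d0 + 1)")
        case True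
        have "W \<subseteq> {w\<in>proj V {..<n}. vlen w \<le> k}"
        proof
          fix w assume w: "w \<in> W"
          hence "w \<subseteq> {..<n}" using W VG by auto
          hence "w = w \<inter> {..<n}" by auto
          thus "w \<in> {w\<in>proj V {..<n}. vlen w \<le> k}" using w W unfolding proj_def by auto
        qed
        hence "card W \<le> card {w\<in>proj V {..<n}. vlen w \<le> k}"
          by (rule card_mono[rotated]) (use fV in \<open>auto simp: proj_def\<close>)
        also have "real \<dots> \<le> C * real (card {..<n}) powr d1 * real k powr (real d - d1)"
        proof -
          have "{..<n} \<subseteq> {..<n} \<and> 1 \<le> k \<and> k \<le> card {..<n}" using k1 kn by simp
          thus ?thesis using cs unfolding clarkson_shor_def by blast
        qed
        finally have cW: "real (card W) \<le> C * P" unfolding P_def by (simp add: mult.assoc)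
        have "real \<delta> ^ d \<le> c ^ d" using True unfolding c_def by (intro power_mono) auto
        hence "C * P * real \<delta> ^ d \<le> C * P * c ^ d" using Cpos Pnn by (intro mult_left_mono) auto
        also have "\<dots> \<le> K * P" unfolding K_def using Cpos Pnn cpos by (simp add: algebra_simps)
        finally have "C * P \<le> K * P / real \<delta> ^ d" using dpos by (simp add: pos_le_divide_eq)
        thus ?thesis using cW by linarith
      next
        case False
        define m where "m = nat \<lceil>4 * (real d0 + 1) * real n / real \<delta>\<rceil>"
        have mlow: "real m \<ge> 4 * (real d0 + 1) * real n / real \<delta>" unfolding m_def by linarith
        have mup: "real m \<le> 4 * (real d0 + 1) * real n / real \<delta> + 1"
        proof -
          have "0 \<le> 4 * (real d0 + 1) * real n / real \<delta>" by simp
          thus ?thesis unfolding m_def by linarith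
        qed
        have "4 * (real d0 + 1) * real n / real \<delta> > 0" using npos dpos by simp
        hence m1: "1 \<le> m" using mlow by linarith
        have "4 * (real d0 + 1) * real n / real \<delta> \<le> real n"
          using False dpos npos by (simp add: divide_le_eq mult_left_mono)
        hence mn: "m \<le> n" unfolding m_def by (simp add: ceiling_le_iff nat_le_iff)
        have mbig: "4 * real d0 * real n \<le> real \<delta> * real (Suc m)"
        proof -
          have "4 * (real d0 + 1) * real n \<le> real \<delta> * real m" using mlow dpos by (simp add: divide_le_eq mult.commute)
          thus ?thesis by (simp add: algebra_simps)
        qed
        define t' where "t' = nat \<lceil>4 * real k * real m / real n\<rceil>"
        have tlow: "real t' \<ge> 4 * real k * real m / real n" unfolding t'_def by linarith
        have tup: "real t' \<le> 4 * real k * real m / real n + 1"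
        proof -
          have "0 \<le> 4 * real k * real m / real n" by simp
          thus ?thesis unfolding t'_def by linarith
        qed
        have "4 * real k * real m / real n > 0" using kpos npos m1 by simp
        hence t1: "1 \<le> t'" using tlow by linarith
        have tbig: "4 * real k * real m \<le> real (Suc t') * real n"
        proof -
          have "4 * real k * real m \<le> real t' * real n" using tlow npos by (simp add: divide_le_eq)
          thus ?thesis by (simp add: algebra_simps)
        qed
        have sh: "real (card W) \<le> 4 * (C * real m powr d1 * real (min m t') powr (real d - d1))"
          by (rule shallow[OF n1 VG cs W(1) W(2) _ W(3) vc m1 mn mbig t1 tbig]) (use d1' in simp)
        have nd: "1 \<le> real n / real \<delta>" using dlen dpos by simp
        have mc0: "real m \<le> 5 * (real d0 + 1) * (real n / real \<delta>)"
        proof -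
          have "real m \<le> 4 * (real d0 + 1) * (real n / real \<delta>) + real n / real \<delta>" using mup nd by simp
          also have "\<dots> \<le> 5 * (real d0 + 1) * (real n / real \<delta>)"
          proof -
            have x0: "0 \<le> real d0 * (real n / real \<delta>)" by simp
            have "4 * (real d0 + 1) * (real n / real \<delta>) + real n / real \<delta> = 5 * (real d0 + 1) * (real n / real \<delta>) - real d0 * (real n / real \<delta>)"
              by (simp add: algebra_simps)
            thus ?thesis using x0 by linarith
          qed
          finally show ?thesis .
        qed
        have mc: "real m \<le> c * real n / real \<delta>"
        proof -
          have "5 * (real d0 + 1) * (real n / real \<delta>) \<le> c * (real n / real \<delta>)"
            unfolding c_def using nd by (intro mult_right_mono) auto
          thus ?thesis using mc0 by simp
        qed
        have kd: "1 \<le> 2 * (real k / real \<delta>)" using dk dpos by (simp add: le_divide_eq)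
        have tc: "real (min m t') \<le> c * real k / real \<delta>"
        proof -
          have "real (min m t') \<le> real t'" by simp
          also have "\<dots> \<le> 4 * real k * real m / real n + 1" by (rule tup)
          also have "4 * real k * real m / real n \<le> 4 * real k * (5 * (real d0 + 1) * (real n / real \<delta>)) / real n"
            using mc0 kpos npos by (intro divide_right_mono mult_left_mono) auto
          also have "4 * real k * (5 * (real d0 + 1) * (real n / real \<delta>)) / real n = 20 * (real d0 + 1) * (real k / real \<delta>)"
            using npos dpos by (simp add: field_simps)
          finally have "real (min m t') \<le> 20 * (real d0 + 1) * (real k / real \<delta>) + 2 * (real k / real \<delta>)" using kd by linarith
          also have "\<dots> \<le> c * (real k / real \<delta>)"
          proof -
            have "0 \<le> real k / real \<delta>" by simp
            hence "2 * (real k / real \<delta>) \<le> 2 * (real d0 + 1) * (real k / real \<delta>)"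
              by (intro mult_right_mono) auto
            moreover have "c * (real k / real \<delta>) = 20 * (real d0 + 1) * (real k / real \<delta>) + 2 * (real d0 + 1) * (real k / real \<delta>)"
              unfolding c_def by (simp add: algebra_simps)
            ultimately show ?thesis by linarith
          qed
          finally show ?thesis by simp
        qed
        have "real m powr d1 * real (min m t') powr (real d - d1) \<le> c ^ d * P / real \<delta> ^ d"
          unfolding P_def by (rule powr_bound) (use d1pos dd1 mc tc cpos npos kpos dpos in auto)
        hence "4 * C * (real m powr d1 * real (min m t') powr (real d - d1)) \<le> 4 * C * (c ^ d * P / real \<delta> ^ d)"
          using Cpos by (intro mult_left_mono) auto
        also have "\<dots> = K * P / real \<delta> ^ d" unfolding K_def by simp
        finally show ?thesis using sh by (simp add: mult.assoc)
      qed
    qed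
    define Ss where "Ss = {card W | W. W \<subseteq> V \<and> separated \<delta> W \<and> (\<forall>v\<in>W. vlen v \<le> k)}"
    have fSs: "finite Ss"
    proof (rule finite_subset[of _ "card ` Pow V"])
      show "Ss \<subseteq> card ` Pow V" unfolding Ss_def by auto
      show "finite (card ` Pow V)" using fV by simp
    qed
    have neSs: "Ss \<noteq> {}" unfolding Ss_def separated_def by auto
    have "Mpack \<delta> k V = Max Ss" unfolding Mpack_def Ss_def[symmetric] by (rule cSup_eq_Max[OF fSs neSs])
    hence "Mpack \<delta> k V \<in> Ss" using Max_in[OF fSs neSs] by simp
    then obtain W where W: "W \<subseteq> V" "separated \<delta> W" "\<forall>v\<in>W. vlen v \<le> k" "Mpack \<delta> k V = card W"
      unfolding Ss_def by auto
    show "real (Mpack \<delta> k V) \<le> K * real n powr d1 * real k powr (real d - d1) / real \<delta> ^ d"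
      using bound[OF W(1-3)] W(4) unfolding P_def by (simp add: mult.assoc)
  qed
qed


end
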